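(* Let $V$ be a finite-dimensional $G$-module for an algebraic group $G$. (1) For every closed subgroup $H\subset G$ the fixed point set $V^H$ is $G$-symmetric. (2) For all $v\in V$ we have $M(v)=\operatorname{End}_G(V)(v)\subset V^{G_v}$.
   Context: $\Bbbk$ is algebraically closed of characteristic $0$. Vector fields on $V$ are polynomial maps $\xi\colon V\to V$; $\xi$ is $G$-invariant if $\xi(gv)=g\xi(v)$. A closed subvariety $X\subset V$ is $G$-symmetric if $\xi(x)\in T_xX$ for all $x\in X$ and all $G$-invariant vector fields $\xi$. $M(v)$ is the smallest closed $G$-symmetric subvariety containing $v$. $\operatorname{End}_G(V)$ is the set of $G$-equivariant polynomial maps $V\to V$ and $\operatorname{End}_G(V)(v)=\{\phi(v)\mid\phi\in\operatorname{End}_G(V)\}$. $G_v$ is the stabilizer of $v$. *)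

theory Defs
  imports "HOL-Analysis.Analysis" "HOL-Computational_Algebra.Polynomial"
begin

definition alg_closed_field :: "'k::field itself \<Rightarrow> bool" where
  "alg_closed_field _ \<longleftrightarrow> (\<forall>p::'k poly. degree p > 0 \<longrightarrow> (\<exists>x. poly p x = 0))"

inductive_set polys :: "('v \<Rightarrow> 'k::comm_ring_1) set \<Rightarrow> ('v \<Rightarrow> 'k) set"
  for C :: "('v \<Rightarrow> 'k) set" where
  coord: "f \<in> C \<Longrightarrow> f \<in> polys C"
| const: "(\<lambda>_. c) \<in> polys C"
| add: "f \<in> polys C \<Longrightarrow> g \<in> polys C \<Longrightarrow> (\<lambda>x. f x + g x) \<in> polys C"
| mult: "f \<in> polys C \<Longrightarrow> g \<in> polys C \<Longrightarrow> (\<lambda>x. f x * g x) \<in> polys C"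

definition vpolys :: "('k::comm_ring_1 ^ 'n \<Rightarrow> 'k) set" where
  "vpolys = polys {(\<lambda>x. x $ i) | i. True}"

definition mpolys :: "('k::comm_ring_1 ^ 'm ^ 'm \<Rightarrow> 'k) set" where
  "mpolys = polys {(\<lambda>A. A $ i $ j) | i j. True}"

definition poly_map :: "('k::comm_ring_1 ^ 'n \<Rightarrow> 'k ^ 'n) \<Rightarrow> bool" where
  "poly_map \<xi> \<longleftrightarrow> (\<forall>i. (\<lambda>x. \<xi> x $ i) \<in> vpolys)"

definition zariski_closed_GL :: "('k::field ^ 'm ^ 'm) set \<Rightarrow> bool" where
  "zariski_closed_GL S \<longleftrightarrow>
     (\<exists>F \<subseteq> mpolys. S = {g. det g \<noteq> 0 \<and> (\<forall>f\<in>F. f g = 0)})"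

definition matrix_subgroup :: "('k::field ^ 'm ^ 'm) set \<Rightarrow> bool" where
  "matrix_subgroup G \<longleftrightarrow> mat 1 \<in> G \<and> (\<forall>g\<in>G. det g \<noteq> 0) \<and>
     (\<forall>g\<in>G. \<forall>h\<in>G. g ** h \<in> G) \<and> (\<forall>g\<in>G. \<exists>h\<in>G. g ** h = mat 1)"

definition lin_alg_group :: "('k::field ^ 'm ^ 'm) set \<Rightarrow> bool" where
  "lin_alg_group G \<longleftrightarrow> matrix_subgroup G \<and> zariski_closed_GL G"

definition closed_subgroup :: "('k::field ^ 'm ^ 'm) set \<Rightarrow> ('k ^ 'm ^ 'm) set \<Rightarrow> bool" where
  "closed_subgroup G H \<longleftrightarrow> H \<subseteq> G \<and> matrix_subgroup H \<and> zariski_closed_GL H"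

text \<open>A finite dimensional rational G-module V = k^n: a morphism of algebraic groups
  rho : G \<rightarrow> GL(V), i.e. a homomorphism whose matrix entries are regular functions
  on G (polynomials in the entries and 1/det).\<close>
definition rational_rep ::
  "('k::field ^ 'm ^ 'm) set \<Rightarrow> ('k ^ 'm ^ 'm \<Rightarrow> 'k ^ 'n ^ 'n) \<Rightarrow> bool" where
  "rational_rep G \<rho> \<longleftrightarrow>
     (\<forall>g\<in>G. det (\<rho> g) \<noteq> 0) \<and>
     (\<forall>g\<in>G. \<forall>h\<in>G. \<rho> (g ** h) = \<rho> g ** \<rho> h) \<and>
     (\<forall>i j. \<exists>p\<in>mpolys. \<exists>N::nat. \<forall>g\<in>G. \<rho> g $ i $ j = p g / det g ^ N)"

definition closed_subvariety :: "('k::field ^ 'n) set \<Rightarrow> bool" where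
  "closed_subvariety X \<longleftrightarrow> (\<exists>F \<subseteq> vpolys. X = {v. \<forall>f\<in>F. f v = 0})"

text \<open>Differential of a polynomial function f at x applied to w:
  the linear coefficient of the univariate polynomial t \<mapsto> f (x + t w).\<close>
definition dderiv :: "('k::field ^ 'n \<Rightarrow> 'k) \<Rightarrow> 'k ^ 'n \<Rightarrow> 'k ^ 'n \<Rightarrow> 'k" where
  "dderiv f x w = coeff (THE p. \<forall>t. poly p t = f (x + t *s w)) 1"

definition tangent_space :: "('k::field ^ 'n) set \<Rightarrow> 'k ^ 'n \<Rightarrow> ('k ^ 'n) set" where
  "tangent_space X x =
     {w. \<forall>f\<in>vpolys. (\<forall>y\<in>X. f y = 0) \<longrightarrow> dderiv f x w = 0}"

text \<open>G-equivariant polynomial maps V \<rightarrow> V; these are both End_G(V) and the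
  G-invariant vector fields.\<close>
definition equivariant_poly_map ::
  "('k::field ^ 'm ^ 'm) set \<Rightarrow> ('k ^ 'm ^ 'm \<Rightarrow> 'k ^ 'n ^ 'n) \<Rightarrow> ('k ^ 'n \<Rightarrow> 'k ^ 'n) \<Rightarrow> bool" where
  "equivariant_poly_map G \<rho> \<xi> \<longleftrightarrow>
     poly_map \<xi> \<and> (\<forall>g\<in>G. \<forall>v. \<xi> (\<rho> g *v v) = \<rho> g *v \<xi> v)"

definition G_symmetric ::
  "('k::field ^ 'm ^ 'm) set \<Rightarrow> ('k ^ 'm ^ 'm \<Rightarrow> 'k ^ 'n ^ 'n) \<Rightarrow> ('k ^ 'n) set \<Rightarrow> bool" where
  "G_symmetric G \<rho> X \<longleftrightarrow> closed_subvariety X \<and>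
     (\<forall>\<xi>. equivariant_poly_map G \<rho> \<xi> \<longrightarrow> (\<forall>x\<in>X. \<xi> x \<in> tangent_space X x))"

definition Msym ::
  "('k::field ^ 'm ^ 'm) set \<Rightarrow> ('k ^ 'm ^ 'm \<Rightarrow> 'k ^ 'n ^ 'n) \<Rightarrow> 'k ^ 'n \<Rightarrow> ('k ^ 'n) set" where
  "Msym G \<rho> v = \<Inter>{X. G_symmetric G \<rho> X \<and> v \<in> X}"

definition EndG_orbit ::
  "('k::field ^ 'm ^ 'm) set \<Rightarrow> ('k ^ 'm ^ 'm \<Rightarrow> 'k ^ 'n ^ 'n) \<Rightarrow> 'k ^ 'n \<Rightarrow> ('k ^ 'n) set" where
  "EndG_orbit G \<rho> v = {\<phi> v | \<phi>. equivariant_poly_map G \<rho> \<phi>}"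

definition fixed_points ::
  "('k::field ^ 'm ^ 'm \<Rightarrow> 'k ^ 'n ^ 'n) \<Rightarrow> ('k ^ 'm ^ 'm) set \<Rightarrow> ('k ^ 'n) set" where
  "fixed_points \<rho> H = {v. \<forall>h\<in>H. \<rho> h *v v = v}"

definition stabilizer ::
  "('k::field ^ 'm ^ 'm) set \<Rightarrow> ('k ^ 'm ^ 'm \<Rightarrow> 'k ^ 'n ^ 'n) \<Rightarrow> 'k ^ 'n \<Rightarrow> ('k ^ 'm ^ 'm) set" where
  "stabilizer G \<rho> v = {g\<in>G. \<rho> g *v v = v}"

end

theory Submission
  imports Defs "HOL-Library.Function_Algebras"
begin

lemma vp_coord: "(\<lambda>x::'k::comm_ring_1^'n. x $ i) \<in> vpolys"
  unfolding vpolys_def by (rule polys.coord) auto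

lemma vp_const: "(\<lambda>x::'k::comm_ring_1^'n. c) \<in> vpolys"
  unfolding vpolys_def by (rule polys.const)

lemma vp_add: "f \<in> vpolys \<Longrightarrow> g \<in> vpolys \<Longrightarrow> (\<lambda>x. f x + g x) \<in> vpolys"
  unfolding vpolys_def by (rule polys.add)

lemma vp_mult: "f \<in> vpolys \<Longrightarrow> g \<in> vpolys \<Longrightarrow> (\<lambda>x. f x * g x) \<in> vpolys"
  unfolding vpolys_def by (rule polys.mult)

lemma vp_add': "f \<in> vpolys \<Longrightarrow> g \<in> vpolys \<Longrightarrow> f + g \<in> vpolys"
  using vp_add[of f g] by (simp add: plus_fun_def)

lemma vp_mult': "f \<in> vpolys \<Longrightarrow> g \<in> vpolys \<Longrightarrow> f * g \<in> vpolys"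
  using vp_mult[of f g] by (simp add: times_fun_def)

lemma vp_zero: "(0::'k::comm_ring_1^'n \<Rightarrow> 'k) \<in> vpolys"
  using vp_const[of 0] by (simp add: zero_fun_def)

lemma vp_one: "(1::'k::comm_ring_1^'n \<Rightarrow> 'k) \<in> vpolys"
  using vp_const[of 1] by (simp add: one_fun_def)

lemma vp_smult: "f \<in> vpolys \<Longrightarrow> (\<lambda>x. c * f x) \<in> vpolys"
  using vp_mult[OF vp_const] by blast

lemma vp_neg: "(f::'k::comm_ring_1^'n \<Rightarrow> 'k) \<in> vpolys \<Longrightarrow> (\<lambda>x. - f x) \<in> vpolys"
  using vp_smult[of f "-1"] by simp

lemma vp_diff: "(f::'k::comm_ring_1^'n \<Rightarrow> 'k) \<in> vpolys \<Longrightarrow> g \<in> vpolys \<Longrightarrow> (\<lambda>x. f x - g x) \<in> vpolys"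
  using vp_add[OF _ vp_neg, of f g] by simp

lemma vp_sum: "(\<And>a. a \<in> A \<Longrightarrow> f a \<in> vpolys) \<Longrightarrow> (\<lambda>x. \<Sum>a\<in>A. f a x) \<in> vpolys"
proof (induction A rule: infinite_finite_induct)
  case (infinite A) then show ?case by (simp add: vp_const)
next
  case empty then show ?case by (simp add: vp_const)
next
  case (insert a A) then show ?case by (simp add: vp_add)
qed

lemma vp_linear: "(\<lambda>x::'k::comm_ring_1^'n. \<Sum>j\<in>UNIV. c j * x $ j) \<in> vpolys"
  by (rule vp_sum) (rule vp_smult[OF vp_coord])

lemma vp_matvec: "(\<lambda>x::'k::comm_ring_1^'n. (A *v x) $ i) \<in> vpolys"
  unfolding matrix_vector_mult_def using vp_linear by simp

lemma vp_line: "f \<in> vpolys \<Longrightarrow> \<exists>p. \<forall>t. poly p t = f (x + t *s w)"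
  unfolding vpolys_def
proof (induction rule: polys.induct)
  case (coord f)
  then obtain i where f: "f = (\<lambda>x. x $ i)" by auto
  show ?case by (rule exI[of _ "[:x$i, w$i:]"]) (simp add: f algebra_simps)
next
  case (const c) show ?case by (rule exI[of _ "[:c:]"]) simp
next
  case (add f g) then obtain p q where "\<forall>t. poly p t = f (x + t *s w)" "\<forall>t. poly q t = g (x + t *s w)" by blast
  then show ?case by (intro exI[of _ "p+q"]) simp
next
  case (mult f g) then obtain p q where "\<forall>t. poly p t = f (x + t *s w)" "\<forall>t. poly q t = g (x + t *s w)" by blast
  then show ?case by (intro exI[of _ "p*q"]) simp
qed

lemma dderiv_char:
  fixes f :: "'k::field_char_0^'n \<Rightarrow> 'k"
  assumes "\<forall>t. poly p t = f (x + t *s w)"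
  shows "dderiv f x w = coeff p 1"
proof -
  have "(THE p. \<forall>t. poly p t = f (x + t *s w)) = p"
  proof (rule the_equality)
    fix q assume "\<forall>t. poly q t = f (x + t *s w)"
    with assms have "poly q = poly p" by auto
    then show "q = p" by (simp add: poly_eq_poly_eq_iff)
  qed (use assms in auto)
  then show ?thesis unfolding dderiv_def by simp
qed


section \<open>Polynomials with coefficients in a subring\<close>

definition ringlike :: "'a::comm_ring_1 set \<Rightarrow> bool" where
  "ringlike S \<longleftrightarrow> 0 \<in> S \<and> 1 \<in> S \<and> (\<forall>a\<in>S. \<forall>b\<in>S. a + b \<in> S \<and> a * b \<in> S)"

definition cset :: "'a::comm_ring_1 set \<Rightarrow> 'a poly set" where
  "cset S = {p. \<forall>b. coeff p b \<in> S}"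

lemma ringlike_sum: "ringlike S \<Longrightarrow> (\<And>a. a \<in> A \<Longrightarrow> f a \<in> S) \<Longrightarrow> sum f A \<in> S"
proof (induction A rule: infinite_finite_induct)
  case (insert a A) then show ?case by (simp add: ringlike_def)
qed (auto simp: ringlike_def)

lemma ringlike_cset: "ringlike S \<Longrightarrow> ringlike (cset S)"
proof -
  assume S: "ringlike S"
  have 0: "0 \<in> cset S" using S by (simp add: ringlike_def cset_def)
  have 1: "1 \<in> cset S" using S by (auto simp: ringlike_def coeff_1 cset_def)
  have a: "a + b \<in> cset S" if "a \<in> cset S" "b \<in> cset S" for a b
    using S that by (simp add: ringlike_def cset_def)
  have m: "a * b \<in> cset S" if a: "a \<in> cset S" and b: "b \<in> cset S" for a b
    unfolding cset_def coeff_mult mem_Collect_eq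
    using S a b by (intro allI ringlike_sum) (auto simp: ringlike_def cset_def)
  show ?thesis using 0 1 a m by (simp add: ringlike_def)
qed

lemma cset_const: "ringlike S \<Longrightarrow> c \<in> S \<Longrightarrow> [:c:] \<in> cset S"
  by (auto simp: cset_def ringlike_def coeff_pCons split: nat.splits)

lemma cset_pCons: "ringlike S \<Longrightarrow> c \<in> S \<Longrightarrow> p \<in> cset S \<Longrightarrow> pCons c p \<in> cset S"
  by (auto simp: cset_def ringlike_def coeff_pCons split: nat.splits)

lemma cset_monom: "ringlike S \<Longrightarrow> c \<in> S \<Longrightarrow> monom c j \<in> cset S"
  by (auto simp: cset_def ringlike_def coeff_monom)

lemma ringlikeD: "ringlike S \<Longrightarrow> a \<in> S \<Longrightarrow> b \<in> S \<Longrightarrow> a + b \<in> S"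
  "ringlike S \<Longrightarrow> a \<in> S \<Longrightarrow> b \<in> S \<Longrightarrow> a * b \<in> S"
  "ringlike S \<Longrightarrow> 0 \<in> S" "ringlike S \<Longrightarrow> 1 \<in> S"
  by (auto simp: ringlike_def)

lemma cset_poly: "ringlike S \<Longrightarrow> p \<in> cset (cset S) \<Longrightarrow> y \<in> cset S \<Longrightarrow> poly p y \<in> cset S"
proof (induction p)
  case 0
  show ?case using ringlikeD(3)[OF ringlike_cset[OF 0(1)]] by simp
next
  case (pCons a p)
  have R: "ringlike (cset S)" using ringlike_cset[OF pCons.prems(1)] .
  have c: "\<forall>b. coeff (pCons a p) b \<in> cset S" using pCons.prems(2)
    unfolding cset_def[of "cset S"] mem_Collect_eq .
  have "a \<in> cset S" using spec[OF c, of 0] by simp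
  moreover have "p \<in> cset (cset S)" unfolding cset_def[of "cset S"] mem_Collect_eq
  proof
    fix b show "coeff p b \<in> cset S" using spec[OF c, of "Suc b"] by simp
  qed
  ultimately have "poly p y \<in> cset S" "a \<in> cset S" using pCons by auto
  then show ?case using ringlikeD(1,2)[OF R] pCons.prems(3) by simp
qed

lemma ringlike_vpolys: "ringlike (vpolys :: ('k::comm_ring_1^'n::finite \<Rightarrow> 'k) set)"
  unfolding ringlike_def using vp_zero vp_one vp_add' vp_mult' by auto

type_synonym ('k,'n) R0 = "'k^'n \<Rightarrow> 'k"

definition ev1 :: "'k::comm_ring_1^'n \<Rightarrow> ('k,'n) R0 poly \<Rightarrow> 'k poly" where
  "ev1 x p = map_poly (\<lambda>c. c x) p"

definition ev2 :: "'k::comm_ring_1^'n \<Rightarrow> ('k,'n) R0 poly poly \<Rightarrow> 'k poly poly" where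
  "ev2 x P = map_poly (ev1 x) P"

definition evf :: "'k::comm_ring_1^'n \<Rightarrow> 'k \<Rightarrow> 'k \<Rightarrow> ('k,'n) R0 poly poly \<Rightarrow> 'k" where
  "evf x s t P = poly (poly (ev2 x P) [:s:]) t"

lemma map_poly_add_hom:
  assumes "f 0 = 0" "\<And>a b. f (a + b) = f a + f b"
  shows "map_poly f (p + q) = map_poly f p + map_poly f q"
  by (intro poly_eqI) (simp add: coeff_map_poly assms)

lemma hom_sum:
  assumes "f 0 = 0" "\<And>a b. f (a + b) = f a + f b"
  shows "f (sum g A) = (\<Sum>a\<in>A. f (g a))"
  by (induction A rule: infinite_finite_induct) (simp_all add: assms)

lemma map_poly_mult_hom:
  assumes "f 0 = 0" "\<And>a b. f (a + b) = f a + f b" "\<And>a b. f (a * b) = f a * f b"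
  shows "map_poly f (p * q) = map_poly f p * map_poly f q"
  by (intro poly_eqI) (simp add: coeff_map_poly assms coeff_mult hom_sum[of f, OF assms(1,2)])

lemma ev1_0[simp]: "ev1 x 0 = 0" by (simp add: ev1_def)
lemma ev1_add[simp]: "ev1 x (p + q) = ev1 x p + ev1 x q"
  unfolding ev1_def by (rule map_poly_add_hom) auto
lemma ev1_mult[simp]: "ev1 x (p * q) = ev1 x p * ev1 x q"
  unfolding ev1_def by (rule map_poly_mult_hom) auto
lemma ev1_pCons[simp]: "ev1 x (pCons c p) = pCons (c x) (ev1 x p)"
  unfolding ev1_def by (rule map_poly_pCons) simp
lemma ev1_monom[simp]: "ev1 x (monom c j) = monom (c x) j"
  unfolding ev1_def by (rule map_poly_monom) simp
lemma ev1_sum[simp]: "ev1 x (sum g A) = (\<Sum>a\<in>A. ev1 x (g a))"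
  by (rule hom_sum) auto
lemma coeff_ev1[simp]: "coeff (ev1 x p) k = coeff p k x"
  unfolding ev1_def by (simp add: coeff_map_poly)
lemma ev1_1[simp]: "ev1 x 1 = 1" by (simp add: ev1_def)
lemma ev1_diff[simp]: "ev1 x (p - q) = ev1 x p - ev1 x q"
  unfolding ev1_def by (intro poly_eqI) (simp add: coeff_map_poly)
lemma ev1_smult[simp]: "ev1 x (smult c p) = smult (c x) (ev1 x p)"
  unfolding ev1_def by (intro poly_eqI) (simp add: coeff_map_poly)

lemma ev2_0[simp]: "ev2 x 0 = 0" by (simp add: ev2_def)
lemma ev2_add[simp]: "ev2 x (p + q) = ev2 x p + ev2 x q"
  unfolding ev2_def by (rule map_poly_add_hom) auto
lemma ev2_mult[simp]: "ev2 x (p * q) = ev2 x p * ev2 x q"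
  unfolding ev2_def by (rule map_poly_mult_hom) auto
lemma ev2_pCons[simp]: "ev2 x (pCons c p) = pCons (ev1 x c) (ev2 x p)"
  unfolding ev2_def by (rule map_poly_pCons) simp
lemma ev2_sum[simp]: "ev2 x (sum g A) = (\<Sum>a\<in>A. ev2 x (g a))"
  by (rule hom_sum) auto
lemma coeff_ev2[simp]: "coeff (ev2 x p) k = ev1 x (coeff p k)"
  unfolding ev2_def by (simp add: coeff_map_poly)

lemma evf_add[simp]: "evf x s t (P + Q) = evf x s t P + evf x s t Q"
  by (simp add: evf_def)
lemma evf_mult[simp]: "evf x s t (P * Q) = evf x s t P * evf x s t Q"
  by (simp add: evf_def)
lemma evf_sum[simp]: "evf x s t (sum g A) = (\<Sum>a\<in>A. evf x s t (g a))"
  by (rule hom_sum) (auto simp: evf_def)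
lemma evf_const[simp]: "evf x s t [:[:c:]:] = c x"
  by (simp add: evf_def)
lemma evf_pCons: "evf x s t (pCons a P) = poly (ev1 x a) t + s * evf x s t P"
  by (simp add: evf_def)

lemma poly_poly_swap: "poly (poly A [:s:]) t = poly (map_poly (\<lambda>q. poly q t) A) s"
  by (induction A) (simp_all add: map_poly_pCons)

lemma evf_swap: "evf x s t P = poly (map_poly (\<lambda>q. poly (ev1 x q) t) P) s"
  unfolding evf_def ev2_def poly_poly_swap
  by (simp add: map_poly_map_poly o_def)

lemma coeff_poly_const: "coeff (poly A [:s:]) k = poly (map_poly (\<lambda>q. coeff q k) A) s"
  by (induction A) (simp_all add: map_poly_pCons)

lemma kpoly_unique:
  fixes p q :: "'k::field_char_0 poly"
  shows "(\<And>t. poly p t = poly q t) \<Longrightarrow> p = q"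
  using poly_eq_poly_eq_iff by blast

lemma kpoly2_unique:
  fixes A B :: "'k::field_char_0 poly poly"
  assumes "\<And>s t. poly (poly A [:s:]) t = poly (poly B [:s:]) t"
  shows "A = B"
proof -
  have "map_poly (\<lambda>q. coeff q k) A = map_poly (\<lambda>q. coeff q k) B" for k
  proof (rule kpoly_unique)
    fix s
    have "poly A [:s:] = poly B [:s:]" using assms by (intro kpoly_unique) auto
    then show "poly (map_poly (\<lambda>q. coeff q k) A) s = poly (map_poly (\<lambda>q. coeff q k) B) s"
      by (metis coeff_poly_const)
  qed
  then have "coeff (map_poly (\<lambda>q. coeff q k) A) a = coeff (map_poly (\<lambda>q. coeff q k) B) a" for a k
    by simp
  then have "coeff (coeff A a) k = coeff (coeff B a) k" for a k
    by (simp add: coeff_map_poly)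
  then show ?thesis by (simp add: poly_eq_iff)
qed

lemma evf_unique:
  fixes P Q :: "('k::field_char_0,'n::finite) R0 poly poly"
  assumes "\<And>x s t. evf x s t P = evf x s t Q"
  shows "P = Q"
proof -
  have "ev2 x P = ev2 x Q" for x using assms unfolding evf_def by (intro kpoly2_unique) auto
  then have "coeff (coeff P a) b x = coeff (coeff Q a) b x" for a b x
    by (metis coeff_ev1 coeff_ev2)
  then show ?thesis by (simp add: poly_eq_iff fun_eq_iff)
qed

lemma ev1_unique:
  fixes p q :: "('k::field_char_0,'n::finite) R0 poly"
  assumes "\<And>x t. poly (ev1 x p) t = poly (ev1 x q) t"
  shows "p = q"
proof -
  have "ev1 x p = ev1 x q" for x using assms by (intro kpoly_unique) auto
  then have "coeff p b x = coeff q b x" for b x by (metis coeff_ev1)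
  then show ?thesis by (simp add: poly_eq_iff fun_eq_iff)
qed


definition gc :: "('k::comm_ring_1,'n::finite) R0 poly poly \<Rightarrow> bool" where
  "gc P \<longleftrightarrow> P \<in> cset (cset vpolys)"

lemma ringlike_c1: "ringlike (cset (vpolys :: ('k::comm_ring_1,'n::finite) R0 set))"
  by (rule ringlike_cset[OF ringlike_vpolys])
lemma ringlike_c2: "ringlike (cset (cset (vpolys :: ('k::comm_ring_1,'n::finite) R0 set)))"
  by (rule ringlike_cset[OF ringlike_c1])

lemma gc_add: "gc P \<Longrightarrow> gc Q \<Longrightarrow> gc (P + Q)"
  unfolding gc_def using ringlikeD(1)[OF ringlike_c2] .
lemma gc_mult: "gc P \<Longrightarrow> gc Q \<Longrightarrow> gc (P * Q)"
  unfolding gc_def using ringlikeD(2)[OF ringlike_c2] .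
lemma gc_const: "gc [:[:(\<lambda>_. c):]:]"
  unfolding gc_def by (intro cset_const ringlike_c1 cset_const ringlike_vpolys vp_const)
lemma gc_coeff: "gc P \<Longrightarrow> coeff (coeff P a) b \<in> vpolys"
  unfolding gc_def cset_def by auto
lemma gcI: "(\<And>a b. coeff (coeff P a) b \<in> vpolys) \<Longrightarrow> gc P"
  unfolding gc_def cset_def by auto

definition liftp :: "('k::field_char_0^'n::finite \<Rightarrow> 'k) \<Rightarrow> (('k,'n) R0 poly poly)^'n \<Rightarrow> ('k,'n) R0 poly poly" where
  "liftp f Y = (THE P. \<forall>x s t. evf x s t P = f (\<chi> i. evf x s t (Y$i)))"

lemma liftp_eq:
  assumes "\<And>x s t. evf x s t P = f (\<chi> i. evf x s t (Y$i))"
  shows "liftp f Y = P"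
  unfolding liftp_def
proof (rule the_equality)
  fix Q assume "\<forall>x s t. evf x s t Q = f (\<chi> i. evf x s t (Y$i))"
  with assms show "Q = P" by (intro evf_unique) auto
qed (use assms in auto)

lemma liftp_ex:
  fixes f :: "'k::field_char_0^'n::finite \<Rightarrow> 'k"
  assumes "f \<in> vpolys" "\<And>i. gc (Y$i)"
  shows "\<exists>P. gc P \<and> (\<forall>x s t. evf x s t P = f (\<chi> i. evf x s t (Y$i)))"
  using assms(1) unfolding vpolys_def
proof (induction rule: polys.induct)
  case (coord f)
  then obtain i where f: "f = (\<lambda>x. x $ i)" by auto
  show ?case by (rule exI[of _ "Y$i"]) (simp add: f assms(2))
next
  case (const c)
  show ?case by (rule exI[of _ "[:[:(\<lambda>_. c):]:]"]) (simp add: gc_const)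
next
  case (add f g)
  then obtain P Q where "gc P" "\<forall>x s t. evf x s t P = f (\<chi> i. evf x s t (Y$i))"
    "gc Q" "\<forall>x s t. evf x s t Q = g (\<chi> i. evf x s t (Y$i))" by blast
  then show ?case by (intro exI[of _ "P+Q"]) (simp add: gc_add)
next
  case (mult f g)
  then obtain P Q where "gc P" "\<forall>x s t. evf x s t P = f (\<chi> i. evf x s t (Y$i))"
    "gc Q" "\<forall>x s t. evf x s t Q = g (\<chi> i. evf x s t (Y$i))" by blast
  then show ?case by (intro exI[of _ "P*Q"]) (simp add: gc_mult)
qed

lemma liftp_spec:
  fixes f :: "'k::field_char_0^'n::finite \<Rightarrow> 'k"
  assumes "f \<in> vpolys" "\<And>i. gc (Y$i)"
  shows "gc (liftp f Y)" "evf x s t (liftp f Y) = f (\<chi> i. evf x s t (Y$i))"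
proof -
  obtain P where P: "gc P" "\<forall>x s t. evf x s t P = f (\<chi> i. evf x s t (Y$i))"
    using liftp_ex[OF assms] by blast
  then have "liftp f Y = P" by (intro liftp_eq) auto
  then show "gc (liftp f Y)" "evf x s t (liftp f Y) = f (\<chi> i. evf x s t (Y$i))"
    using P by auto
qed

lemma liftp_coord: "liftp (\<lambda>x. x $ i) Y = Y $ i"
  by (rule liftp_eq) simp

lemma liftp_const: "liftp (\<lambda>_. c) Y = [:[:(\<lambda>_. c):]:]"
  by (rule liftp_eq) simp

lemma liftp_add:
  assumes "f \<in> vpolys" "g \<in> vpolys" "\<And>i. gc (Y$i)"
  shows "liftp (\<lambda>x. f x + g x) Y = liftp f Y + liftp g Y"
  by (rule liftp_eq) (simp add: liftp_spec assms)

lemma liftp_mult: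
  assumes "f \<in> vpolys" "g \<in> vpolys" "\<And>i. gc (Y$i)"
  shows "liftp (\<lambda>x. f x * g x) Y = liftp f Y * liftp g Y"
  by (rule liftp_eq) (simp add: liftp_spec assms)

lemma coeff_mult_0: "coeff (p * q) 0 = coeff p 0 * coeff q 0"
  by (simp add: coeff_mult)

lemma coeff_mult_1: "coeff (p * q) (Suc 0) = coeff p 0 * coeff q (Suc 0) + coeff p (Suc 0) * coeff q 0"
  by (simp add: coeff_mult numeral_2_eq_2 atMost_Suc add.commute)

lemma FO:
  fixes f :: "'k::field_char_0^'n::finite \<Rightarrow> 'k"
  assumes "f \<in> vpolys" "\<And>i. gc (Y$i)" "\<And>i. gc (Y'$i)"
    "\<And>i. coeff (Y$i) 0 = coeff (Y'$i) 0" "\<And>i. coeff (Y$i) 1 = coeff (Y'$i) 1"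
  shows "coeff (liftp f Y) 0 = coeff (liftp f Y') 0 \<and> coeff (liftp f Y) 1 = coeff (liftp f Y') 1"
  using assms(1)
proof (induction rule: polys.induct[of f "{(\<lambda>x. x $ i) | i. True}", OF assms(1)[unfolded vpolys_def]])
  case (1 f)
  then obtain i where f: "f = (\<lambda>x. x $ i)" by auto
  show ?case using assms(4,5)[of i] by (simp add: f liftp_coord)
next
  case (2 c) show ?case by (simp add: liftp_const)
next
  case (3 f g)
  have v: "f \<in> vpolys" "g \<in> vpolys" using 3 unfolding vpolys_def by auto
  show ?case using 3 v by (simp add: liftp_add assms(2,3) vpolys_def)
next
  case (4 f g)
  have v: "f \<in> vpolys" "g \<in> vpolys" using 4 unfolding vpolys_def by auto
  show ?case using 4 v by (simp add: liftp_mult assms(2,3) vpolys_def coeff_mult_0 coeff_mult_1)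
qed

definition dual :: "(('k::comm_ring_1,'n::finite) R0 poly)^'n \<Rightarrow> (('k,'n) R0 poly)^'n \<Rightarrow> (('k,'n) R0 poly poly)^'n" where
  "dual A B = (\<chi> i. pCons (A$i) [:B$i:])"

definition c1v :: "(('k::comm_ring_1,'n::finite) R0 poly)^'n \<Rightarrow> bool" where
  "c1v A \<longleftrightarrow> (\<forall>i. A$i \<in> cset vpolys)"

lemma gc_dual: "c1v A \<Longrightarrow> c1v B \<Longrightarrow> gc (dual A B $ i)"
  unfolding dual_def gc_def c1v_def
  by (simp add: cset_pCons cset_const ringlike_c1 ringlike_vpolys)

lemma coeff_dual[simp]: "coeff (dual A B $ i) 0 = A $ i" "coeff (dual A B $ i) 1 = B $ i"
  "coeff (dual A B $ i) (Suc 0) = B $ i"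
  by (simp_all add: dual_def)

lemma c1v_add: "c1v A \<Longrightarrow> c1v B \<Longrightarrow> c1v (A + B)"
  unfolding c1v_def using ringlikeD(1)[OF ringlike_c1] by auto

lemma D0:
  fixes f :: "'k::field_char_0^'n::finite \<Rightarrow> 'k"
  assumes "f \<in> vpolys" "c1v A" "c1v B" "c1v B'"
  shows "coeff (liftp f (dual A B)) 0 = coeff (liftp f (dual A B')) 0"
proof (induction rule: polys.induct[of f "{(\<lambda>x. x $ i) | i. True}", OF assms(1)[unfolded vpolys_def]])
  case (1 f)
  then obtain i where f: "f = (\<lambda>x. x $ i)" by auto
  show ?case by (simp add: f liftp_coord)
next
  case (2 c) show ?case by (simp add: liftp_const)
next
  case (3 f g)
  have v: "f \<in> vpolys" "g \<in> vpolys" using 3 unfolding vpolys_def by auto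
  show ?case using 3 v assms by (simp add: liftp_add gc_dual vpolys_def)
next
  case (4 f g)
  have v: "f \<in> vpolys" "g \<in> vpolys" using 4 unfolding vpolys_def by auto
  show ?case using 4 v assms by (simp add: liftp_mult gc_dual vpolys_def coeff_mult_0)
qed

lemma DADD:
  fixes f :: "'k::field_char_0^'n::finite \<Rightarrow> 'k"
  assumes "f \<in> vpolys" "c1v A" "c1v B1" "c1v B2"
  shows "coeff (liftp f (dual A B1)) 0 = coeff (liftp f (dual A B2)) 0 \<and>
    coeff (liftp f (dual A (B1 + B2))) 1 = coeff (liftp f (dual A B1)) 1 + coeff (liftp f (dual A B2)) 1"
proof (induction rule: polys.induct[of f "{(\<lambda>x. x $ i) | i. True}", OF assms(1)[unfolded vpolys_def]])
  case (1 f)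
  then obtain i where f: "f = (\<lambda>x. x $ i)" by auto
  show ?case by (simp add: f liftp_coord)
next
  case (2 c) show ?case by (simp add: liftp_const)
next
  case (3 f g)
  have v: "f \<in> vpolys" "g \<in> vpolys" using 3 unfolding vpolys_def by auto
  show ?case using 3 v assms c1v_add[OF assms(3,4)]
    by (simp add: liftp_add gc_dual vpolys_def)
next
  case (4 f g)
  have v: "f \<in> vpolys" "g \<in> vpolys" using 4 unfolding vpolys_def by auto
  have e: "coeff (liftp h (dual A (B1 + B2))) 0 = coeff (liftp h (dual A B2)) 0"
    "coeff (liftp h (dual A B1)) 0 = coeff (liftp h (dual A B2)) 0" if "h \<in> vpolys" for h
    using D0[OF that assms(2)] assms c1v_add[OF assms(3,4)] by blast+
  show ?case using 4 v assms c1v_add[OF assms(3,4)] e[OF v(1)] e[OF v(2)]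
    by (simp add: liftp_mult gc_dual vpolys_def coeff_mult_0 coeff_mult_1 algebra_simps)
qed


definition pd :: "'a::comm_semiring_1 poly \<Rightarrow> 'a poly" where
  "pd p = (\<Sum>n<degree p. monom (of_nat (Suc n) * coeff p (Suc n)) n)"

lemma coeff_pd: "coeff (pd p) n = of_nat (Suc n) * coeff p (Suc n)"
proof -
  have "coeff (pd p) n = (\<Sum>m<degree p. if m = n then of_nat (Suc m) * coeff p (Suc m) else 0)"
    unfolding pd_def coeff_sum coeff_monom by (intro sum.cong) auto
  also have "\<dots> = of_nat (Suc n) * coeff p (Suc n)"
    by (cases "n < degree p") (auto simp: coeff_eq_0)
  finally show ?thesis .
qed

lemma pd_pCons: "pd (pCons a p) = p + pCons 0 (pd p)"
  by (rule poly_eqI) (auto simp: coeff_pd coeff_pCons algebra_simps split: nat.splits)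

definition shift :: "('k::comm_ring_1,'n::finite) R0 poly \<Rightarrow> ('k,'n) R0 poly poly" where
  "shift p = poly (map_poly (\<lambda>c. [:[:c:]:]) p) [:[:0,1:],1:]"

lemma shift_pCons: "shift (pCons a p) = [:[:a:]:] + [:[:0,1:],1:] * shift p"
  unfolding shift_def by (simp add: map_poly_pCons)

lemma coeff_shift: "coeff (shift p) 0 = p \<and> coeff (shift p) (Suc 0) = pd p"
proof (induction p)
  case 0 then show ?case by (simp add: shift_def pd_def)
next
  case (pCons a p)
  show ?case unfolding shift_pCons using pCons(2)
    by (simp add: coeff_mult_0 coeff_mult_1 pd_pCons add_pCons[symmetric] algebra_simps)
qed

lemma evf_shift: "evf x s t (shift p) = poly (ev1 x p) (t + s)"
proof (induction p)
  case 0 then show ?case by (simp add: shift_def evf_def)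
next
  case (pCons a p)
  have "evf x s t [:[:0,1:],1:] = t + s" by (simp add: evf_pCons evf_def)
  moreover have "evf x s t (shift (pCons a p)) = evf x s t [:[:a:]:] + evf x s t [:[:0,1:],1:] * evf x s t (shift p)"
    unfolding shift_pCons by (simp only: evf_add evf_mult)
  ultimately show ?case using pCons(2) by (simp add: algebra_simps)
qed

lemma gc_shift: "p \<in> cset vpolys \<Longrightarrow> gc (shift p)"
  unfolding gc_def shift_def
proof (rule cset_poly[OF ringlike_c1])
  assume p: "p \<in> cset vpolys"
  have "[:[:coeff p b:]:] \<in> cset (cset vpolys)" for b
  proof -
    have "coeff p b \<in> vpolys" using p unfolding cset_def by auto
    then show ?thesis by (intro cset_const[OF ringlike_c1] cset_const[OF ringlike_vpolys])
  qed
  then show "map_poly (\<lambda>c. [:[:c:]:]) p \<in> cset (cset (cset vpolys))"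
    unfolding cset_def[of "cset (cset vpolys)"] by (simp add: coeff_map_poly)
  show "[:[:0, 1:], 1:] \<in> cset (cset vpolys)"
    by (intro cset_pCons cset_const ringlike_c1 ringlike_vpolys ringlikeD[OF ringlike_c1]
        ringlikeD[OF ringlike_vpolys])
qed

lemma evf_s0: "evf x 0 t P = poly (ev1 x (coeff P 0)) t"
  unfolding evf_swap by (simp add: poly_0_coeff_0 coeff_map_poly)

lemma evf_dual: "evf x s t (dual A B $ i) = poly (ev1 x (A$i)) t + s * poly (ev1 x (B$i)) t"
  by (simp add: dual_def evf_pCons evf_def)

definition pdv :: "(('k::comm_ring_1,'n::finite) R0 poly)^'n \<Rightarrow> (('k,'n) R0 poly)^'n" where
  "pdv A = (\<chi> i. pd (A$i))"

lemma c1v_zero: "c1v (0 :: (('k::comm_ring_1,'n::finite) R0 poly)^'n)"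
  unfolding c1v_def using ringlikeD(3)[OF ringlike_c1] by simp

lemma vp_of_nat: "(of_nat n :: ('k::comm_ring_1,'n::finite) R0) \<in> vpolys"
  unfolding of_nat_fun by (rule vp_const)

lemma c1v_pdv: "c1v A \<Longrightarrow> c1v (pdv A)"
  unfolding c1v_def pdv_def cset_def
  by (simp only: vec_lambda_beta coeff_pd mem_Collect_eq) (blast intro: vp_mult'[OF vp_of_nat])

lemma DERIV_lift:
  fixes f :: "'k::field_char_0^'n::finite \<Rightarrow> 'k"
  assumes f: "f \<in> vpolys" and A: "c1v A"
  shows "pd (coeff (liftp f (dual A 0)) 0) = coeff (liftp f (dual A (pdv A))) 1"
proof -
  define h where "h = coeff (liftp f (dual A 0)) 0"
  have gd: "\<And>i. gc (dual A 0 $ i)" by (rule gc_dual[OF A c1v_zero])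
  have gs: "\<And>i. gc ((\<chi> i. shift (A$i)) $ i)" using A by (simp add: c1v_def gc_shift)
  have hv: "poly (ev1 x h) \<tau> = f (\<chi> i. poly (ev1 x (A$i)) \<tau>)" for x \<tau>
    using liftp_spec(2)[OF f gd, of x 0 \<tau>] unfolding h_def evf_s0 by (simp add: evf_dual)
  have "liftp f (\<chi> i. shift (A$i)) = shift h"
    by (rule liftp_eq) (simp add: evf_shift hv)
  moreover have "coeff (liftp f (\<chi> i. shift (A$i))) 1 = coeff (liftp f (dual A (pdv A))) 1"
    using FO[OF f gs gc_dual[OF A c1v_pdv[OF A]]] coeff_shift[of "A$_"]
    by (simp add: pdv_def)
  ultimately show ?thesis using coeff_shift[of h] by (simp add: h_def)
qed


abbreviation Eq :: "('k::field ^ 'm ^ 'm) set \<Rightarrow> ('k ^ 'm ^ 'm \<Rightarrow> 'k ^ 'n ^ 'n) \<Rightarrow> ('k ^ 'n \<Rightarrow> 'k ^ 'n) \<Rightarrow> bool" where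
  "Eq G \<rho> \<phi> \<equiv> equivariant_poly_map G \<rho> \<phi>"

lemma Eq_id: "Eq G \<rho> (\<lambda>y. y)"
  by (simp add: equivariant_poly_map_def poly_map_def vp_coord)

lemma Eq_zero: "Eq G \<rho> (\<lambda>y. 0)"
  by (simp add: equivariant_poly_map_def poly_map_def vp_const)

lemma Eq_add: "Eq G \<rho> \<phi> \<Longrightarrow> Eq G \<rho> \<psi> \<Longrightarrow> Eq G \<rho> (\<lambda>y. \<phi> y + \<psi> y)"
  by (simp add: equivariant_poly_map_def poly_map_def vp_add matrix_vector_right_distrib)

lemma Eq_diff: "Eq G \<rho> \<phi> \<Longrightarrow> Eq G \<rho> \<psi> \<Longrightarrow> Eq G \<rho> (\<lambda>y. \<phi> y - \<psi> y)"
  by (simp add: equivariant_poly_map_def poly_map_def vp_diff matrix_vector_mult_diff_distrib)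

lemma Eq_smult: "Eq G \<rho> \<phi> \<Longrightarrow> Eq G \<rho> (\<lambda>y. c *s \<phi> y)"
  by (simp add: equivariant_poly_map_def poly_map_def vp_smult vector_scalar_commute)

lemma Eq_poly_map: "Eq G \<rho> \<phi> \<Longrightarrow> (\<lambda>y. \<phi> y $ i) \<in> vpolys"
  by (simp add: equivariant_poly_map_def poly_map_def)


definition om :: "('k::field_char_0^'n::finite \<Rightarrow> 'k^'n) \<Rightarrow> ('k^'n \<Rightarrow> 'k^'n) \<Rightarrow> 'k^'n \<Rightarrow> 'k^'n" where
  "om \<phi> \<xi> y = (\<chi> i. dderiv (\<lambda>z. \<phi> z $ i) y (\<xi> y))"

definition Base :: "('k::field_char_0^'n::finite \<Rightarrow> 'k^'n) \<Rightarrow> (('k,'n) R0 poly poly)^'n" where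
  "Base \<xi> = dual (\<chi> l. [:(\<lambda>y. y $ l):]) (\<chi> l. [:(\<lambda>y. \<xi> y $ l):])"

lemma c1v_const: "(\<And>l. f l \<in> vpolys) \<Longrightarrow> c1v (\<chi> l. [:f l:])"
  unfolding c1v_def by (auto intro: cset_const[OF ringlike_vpolys])

lemma gc_Base: "poly_map \<xi> \<Longrightarrow> gc (Base \<xi> $ i)"
  unfolding Base_def poly_map_def
  by (intro gc_dual c1v_const vp_coord) auto

lemma evf_Base: "(\<chi> i. evf x s t (Base \<xi> $ i)) = x + s *s \<xi> x"
  by (simp add: Base_def evf_dual vec_eq_iff)

lemma evf_Base_i: "evf x s t (Base \<xi> $ i) = (x + s *s \<xi> x) $ i"
  by (simp add: Base_def evf_dual)

lemma P_lemma:
  fixes \<phi> \<xi> :: "'k::field_char_0^'n::finite \<Rightarrow> 'k^'n" and i :: 'n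
  assumes "poly_map \<phi>" "poly_map \<xi>"
  defines "P \<equiv> liftp (\<lambda>z. \<phi> z $ i) (Base \<xi>)"
  shows "gc P" "evf x s t P = \<phi> (x + s *s \<xi> x) $ i"
    "coeff P 0 = [:(\<lambda>y. \<phi> y $ i):]"
    "coeff P 1 = [:(\<lambda>y. om \<phi> \<xi> y $ i):]"
proof -
  have f: "(\<lambda>z. \<phi> z $ i) \<in> vpolys" using assms(1) by (simp add: poly_map_def)
  note sp = liftp_spec[OF f gc_Base[OF assms(2)]]
  show "gc P" using sp(1) by (simp add: P_def)
  have ev: "evf x s t P = \<phi> (x + s *s \<xi> x) $ i" for x s t
    using sp(2)[of x s t] by (simp add: P_def evf_Base)
  then show "evf x s t P = \<phi> (x + s *s \<xi> x) $ i" .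
  define Q where "Q x t = map_poly (\<lambda>q. poly (ev1 x q) t) P" for x t
  have Q: "poly (Q x t) s = \<phi> (x + s *s \<xi> x) $ i" for x t s
    using ev[of x s t] unfolding evf_swap Q_def by simp
  have cQ: "coeff (Q x t) a = poly (ev1 x (coeff P a)) t" for x t a
    unfolding Q_def by (simp add: coeff_map_poly)
  show "coeff P 0 = [:(\<lambda>y. \<phi> y $ i):]"
  proof (rule ev1_unique)
    fix x t
    have "poly (ev1 x (coeff P 0)) t = poly (Q x t) 0" by (simp add: cQ poly_0_coeff_0)
    then show "poly (ev1 x (coeff P 0)) t = poly (ev1 x [:(\<lambda>y. \<phi> y $ i):]) t"
      using Q[of x t 0] by simp
  qed
  show "coeff P 1 = [:(\<lambda>y. om \<phi> \<xi> y $ i):]"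
  proof (rule ev1_unique)
    fix x t
    have "dderiv (\<lambda>z. \<phi> z $ i) x (\<xi> x) = coeff (Q x t) 1"
      by (rule dderiv_char) (simp add: Q)
    then show "poly (ev1 x (coeff P 1)) t = poly (ev1 x [:(\<lambda>y. om \<phi> \<xi> y $ i):]) t"
      by (simp add: cQ om_def)
  qed
qed

lemma om_poly_map:
  assumes "poly_map \<phi>" "poly_map \<xi>"
  shows "poly_map (om \<phi> \<xi>)"
  unfolding poly_map_def
proof
  fix i
  have "(\<lambda>y. om \<phi> \<xi> y $ i) = coeff (coeff (liftp (\<lambda>z. \<phi> z $ i) (Base \<xi>)) 1) 0"
    using P_lemma(4)[OF assms, of i] by simp
  then show "(\<lambda>y. om \<phi> \<xi> y $ i) \<in> vpolys"
    using gc_coeff[OF P_lemma(1)[OF assms, of i]] by metis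
qed

lemma om_equiv:
  fixes \<phi> \<xi> :: "'k::field_char_0^'n::finite \<Rightarrow> 'k^'n"
  assumes "poly_map \<phi>" "\<And>y. \<phi> (A *v y) = A *v \<phi> y" "\<And>y. \<xi> (A *v y) = A *v \<xi> y"
  shows "om \<phi> \<xi> (A *v y) = A *v om \<phi> \<xi> y"
proof -
  have "\<exists>p. \<forall>s. poly p s = \<phi> (y + s *s \<xi> y) $ l" for l
    using vp_line[of "\<lambda>z. \<phi> z $ l" y "\<xi> y"] assms(1) by (simp add: poly_map_def)
  then obtain p where p: "\<And>l s. poly (p l) s = \<phi> (y + s *s \<xi> y) $ l" by metis
  have d: "dderiv (\<lambda>z. \<phi> z $ l) y (\<xi> y) = coeff (p l) 1" for l
    by (rule dderiv_char) (simp add: p)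
  show ?thesis
  proof (subst vec_eq_iff, rule allI)
    fix i
    have "poly (\<Sum>l\<in>UNIV. smult (A$i$l) (p l)) s = \<phi> (A *v y + s *s \<xi> (A *v y)) $ i" for s
    proof -
      have "\<phi> (A *v y + s *s \<xi> (A *v y)) = \<phi> (A *v (y + s *s \<xi> y))"
        by (simp add: assms(3) matrix_vector_right_distrib vector_scalar_commute)
      also have "\<dots> = A *v \<phi> (y + s *s \<xi> y)" by (rule assms(2))
      finally show ?thesis
        by (simp add: poly_sum p matrix_vector_mult_def)
    qed
    then have "dderiv (\<lambda>z. \<phi> z $ i) (A *v y) (\<xi> (A *v y)) = coeff (\<Sum>l\<in>UNIV. smult (A$i$l) (p l)) 1"
      by (intro dderiv_char) simp
    then show "om \<phi> \<xi> (A *v y) $ i = (A *v om \<phi> \<xi> y) $ i"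
      by (simp add: om_def d coeff_sum matrix_vector_mult_def)
  qed
qed

lemma om_Eq: "Eq G \<rho> \<phi> \<Longrightarrow> Eq G \<rho> \<xi> \<Longrightarrow> Eq G \<rho> (om \<phi> \<xi>)"
  unfolding equivariant_poly_map_def
  using om_poly_map om_equiv by blast

lemma om_zero: "om (\<lambda>y. 0) \<xi> y = 0"
proof -
  have "dderiv (\<lambda>z. (0::'a::field_char_0^'b::finite) $ i) y (\<xi> y) = coeff 0 1" for i
    by (rule dderiv_char) simp
  then show ?thesis by (simp add: om_def vec_eq_iff)
qed

lemma om_id: "om (\<lambda>y. y) \<xi> y = \<xi> y"
proof -
  have "dderiv (\<lambda>z. z $ i) y (\<xi> y) = coeff [:y $ i, \<xi> y $ i:] 1" for i
    by (rule dderiv_char) (simp add: algebra_simps)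
  then show ?thesis by (simp add: om_def vec_eq_iff)
qed


definition Phi :: "nat \<Rightarrow> (nat \<Rightarrow> 'k::field_char_0^'n::finite \<Rightarrow> 'k^'n) \<Rightarrow> (('k,'n) R0 poly)^'n" where
  "Phi N ps = (\<chi> i. \<Sum>j\<le>N. monom (\<lambda>y. ps j y $ i) j)"

definition Phit :: "nat \<Rightarrow> (nat \<Rightarrow> 'k::field_char_0^'n::finite \<Rightarrow> 'k^'n) \<Rightarrow> 'k \<Rightarrow> 'k^'n \<Rightarrow> 'k^'n" where
  "Phit N ps t x = (\<Sum>j\<le>N. t^j *s ps j x)"

definition fam :: "('k::field_char_0 ^ 'm ^ 'm) set \<Rightarrow> ('k ^ 'm ^ 'm \<Rightarrow> 'k ^ 'n::finite ^ 'n) \<Rightarrow> nat \<Rightarrow> (nat \<Rightarrow> 'k^'n \<Rightarrow> 'k^'n) \<Rightarrow> bool" where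
  "fam G \<rho> N ps \<longleftrightarrow> (\<forall>y. ps 0 y = y) \<and> (\<forall>j. Eq G \<rho> (ps j)) \<and> (\<forall>j>N. \<forall>y. ps j y = 0)"

lemma fam_Eq: "fam G \<rho> N ps \<Longrightarrow> Eq G \<rho> (ps j)"
  by (simp add: fam_def)

lemma fam_pm: "fam G \<rho> N ps \<Longrightarrow> poly_map (ps j)"
  by (simp add: fam_def equivariant_poly_map_def)

lemma sum_if_eq: "(\<Sum>j\<le>(N::nat). if j = m then c j else 0) = (if m \<le> N then c m else 0)"
  by (induction N) auto

lemma coeff_Phi:
  assumes "fam G \<rho> N ps"
  shows "coeff (Phi N ps $ i) m = (\<lambda>y. ps m y $ i)"
proof -
  have "coeff (Phi N ps $ i) m = (if m \<le> N then (\<lambda>y. ps m y $ i) else 0)"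
    unfolding Phi_def by (simp add: coeff_sum coeff_monom sum_if_eq)
  also have "\<dots> = (\<lambda>y. ps m y $ i)" using assms by (auto simp: fam_def fun_eq_iff)
  finally show ?thesis .
qed

lemma c1v_Phi: "fam G \<rho> N ps \<Longrightarrow> c1v (Phi N ps)"
  unfolding c1v_def cset_def by (auto simp: coeff_Phi intro!: Eq_poly_map fam_Eq)

lemma ev_Phi: "poly (ev1 x (Phi N ps $ i)) t = Phit N ps t x $ i"
  by (simp add: Phi_def Phit_def poly_sum poly_monom mult.commute)

lemma CF:
  assumes "f \<in> vpolys" "fam G \<rho> N ps"
  shows "poly (ev1 x (coeff (liftp f (dual (Phi N ps) 0)) 0)) t = f (Phit N ps t x)"
proof -
  have g: "\<And>i. gc (dual (Phi N ps) 0 $ i)" by (rule gc_dual[OF c1v_Phi[OF assms(2)] c1v_zero])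
  show ?thesis using liftp_spec(2)[OF assms(1) g, of x 0 t]
    by (simp add: evf_s0 evf_dual ev_Phi vec_eq_iff[symmetric])
qed

definition Bv :: "nat \<Rightarrow> (nat \<Rightarrow> 'k::field_char_0^'n::finite \<Rightarrow> 'k^'n) \<Rightarrow> (('k,'n) R0 poly)^'n" where
  "Bv N ps = (\<chi> i. \<Sum>j\<le>N. monom (\<lambda>y. om (ps j) (ps 1) y $ i) j)"

lemma coeff_Bv:
  assumes "fam G \<rho> N ps"
  shows "coeff (Bv N ps $ i) m = (\<lambda>y. om (ps m) (ps 1) y $ i)"
proof -
  have "coeff (Bv N ps $ i) m = (if m \<le> N then (\<lambda>y. om (ps m) (ps 1) y $ i) else 0)"
    unfolding Bv_def by (simp add: coeff_sum coeff_monom sum_if_eq)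
  also have "\<dots> = (\<lambda>y. om (ps m) (ps 1) y $ i)"
  proof (cases "m \<le> N")
    case False
    then have "ps m = (\<lambda>y. 0)" using assms by (auto simp: fam_def fun_eq_iff)
    then have "om (ps m) (ps 1) y = 0" for y using om_zero by metis
    then show ?thesis using False by (simp add: fun_eq_iff)
  qed simp
  finally show ?thesis .
qed

lemma c1v_Bv: "fam G \<rho> N ps \<Longrightarrow> c1v (Bv N ps)"
proof -
  assume fm: "fam G \<rho> N ps"
  have "Eq G \<rho> (om (ps m) (ps 1))" for m by (rule om_Eq[OF fam_Eq[OF fm] fam_Eq[OF fm]])
  then show ?thesis unfolding c1v_def cset_def
    by (auto simp: coeff_Bv[OF fm] intro!: Eq_poly_map)
qed

lemma monom_const: "monom 1 j * [:c:] = monom (c::'a::comm_ring_1) j"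
  by (simp add: monom_0[symmetric] mult_monom)

lemma gc_monom1: "gc [:monom 1 j:]"
  by (rule gcI) (auto simp: coeff_pCons coeff_monom vp_one vp_zero split: nat.splits)

lemma gc_sum: "(\<And>a. a \<in> A \<Longrightarrow> gc (g a)) \<Longrightarrow> gc (sum g A)"
  unfolding gc_def by (rule ringlike_sum[OF ringlike_c2])

lemma S2:
  assumes f: "f \<in> vpolys" and fm: "fam G \<rho> N ps"
  shows "dderiv (coeff (coeff (liftp f (dual (Phi N ps) 0)) 0) k) x (ps 1 x)
       = coeff (coeff (liftp f (dual (Phi N ps) (Bv N ps))) 1) k x"
proof -
  define h where "h = coeff (liftp f (dual (Phi N ps) 0)) 0"
  define P where "P j i = liftp (\<lambda>z. ps j z $ i) (Base (ps 1))" for j i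
  have PL: "gc (P j i)" "evf x s t (P j i) = ps j (x + s *s ps 1 x) $ i"
    "coeff (P j i) 0 = [:(\<lambda>y. ps j y $ i):]"
    "coeff (P j i) 1 = [:(\<lambda>y. om (ps j) (ps 1) y $ i):]" for j i x s t
    unfolding P_def using P_lemma[OF fam_pm[OF fm] fam_pm[OF fm]] by blast+
  define Y where "Y = (\<chi> i. \<Sum>j\<le>N. [:monom 1 j:] * P j i)"
  have gY: "gc (Y $ i)" for i
    unfolding Y_def vec_lambda_beta by (intro gc_sum gc_mult gc_monom1 PL(1))
  have evm: "evf x s t [:monom 1 j:] = t ^ j" for x s t j
    by (simp add: evf_pCons poly_monom one_fun_def[symmetric] evf_def)
  have evY: "(\<chi> i. evf x s t (Y $ i)) = Phit N ps t (x + s *s ps 1 x)" for x s t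
    unfolding Y_def vec_lambda_beta evf_sum evf_mult evm PL(2)
    by (simp add: Phit_def vec_eq_iff)
  define L where "L = liftp f Y"
  have evL: "evf x s t L = f (Phit N ps t (x + s *s ps 1 x))" for x s t
    using liftp_spec(2)[OF f gY] by (simp add: L_def evY)
  define w where "w = ps 1 x"
  have eq: "ev1 (x + s *s w) h = poly (ev2 x L) [:s:]" for s
    by (rule kpoly_unique) (simp add: h_def CF[OF f fm] evL[unfolded evf_def] w_def)
  have "dderiv (coeff h k) x w = coeff (map_poly (\<lambda>q. coeff q k) (ev2 x L)) 1"
  proof (rule dderiv_char, rule allI)
    fix s
    have "coeff h k (x + s *s w) = coeff (ev1 (x + s *s w) h) k" by simp
    also have "\<dots> = poly (map_poly (\<lambda>q. coeff q k) (ev2 x L)) s"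
      by (simp only: eq coeff_poly_const)
    finally show "poly (map_poly (\<lambda>q. coeff q k) (ev2 x L)) s = coeff h k (x + s *s w)" by simp
  qed
  then have d: "dderiv (coeff h k) x w = coeff (coeff L 1) k x"
    by (simp add: coeff_map_poly)
  have cY: "coeff (Y $ i) a = (\<Sum>j\<le>N. monom 1 j * coeff (P j i) a)" for i a
    by (simp add: Y_def coeff_sum)
  have c0: "coeff (Y $ i) 0 = Phi N ps $ i" for i
    by (simp add: cY PL(3) smult_monom Phi_def)
  have c1: "coeff (Y $ i) 1 = Bv N ps $ i" for i
    by (simp add: cY PL(4)[unfolded One_nat_def] smult_monom Bv_def)
  have "coeff L 1 = coeff (liftp f (dual (Phi N ps) (Bv N ps))) 1"
    using FO[OF f gY gc_dual[OF c1v_Phi[OF fm] c1v_Bv[OF fm]]] c0 c1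
    by (simp add: L_def)
  then show ?thesis using d by (simp add: h_def w_def)
qed


lemma pol:
  fixes f :: "'k::field_char_0^'n::finite \<Rightarrow> 'k"
  assumes f: "f \<in> vpolys" and A: "c1v A" and Z: "c1v Z"
    and h: "\<And>lam. coeff (coeff (liftp f (dual (\<chi> i. A$i + smult (\<lambda>_. lam) (Z$i)) 0)) 0) k x = 0"
  shows "coeff (coeff (liftp f (dual A Z)) 1) k x = 0"
proof -
  define M where "M = liftp f (dual A Z)"
  have evM: "evf x s t M = f (\<chi> i. poly (ev1 x (A$i)) t + s * poly (ev1 x (Z$i)) t)" for s t
    using liftp_spec(2)[OF f gc_dual[OF A Z]] by (simp add: M_def evf_dual)
  have cl: "c1v (\<chi> i. A$i + smult (\<lambda>_. lam) (Z$i))" for lam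
    using A Z unfolding c1v_def cset_def by (auto intro!: vp_add' vp_mult' vp_const)
  have z: "poly (map_poly (\<lambda>q. coeff q k) (ev2 x M)) lam = 0" for lam
  proof -
    define h' where "h' = coeff (liftp f (dual (\<chi> i. A$i + smult (\<lambda>_. lam) (Z$i)) 0)) 0"
    have "ev1 x h' = poly (ev2 x M) [:lam:]"
    proof (rule kpoly_unique)
      fix t
      have "poly (ev1 x h') t = f (\<chi> i. poly (ev1 x (A$i)) t + lam * poly (ev1 x (Z$i)) t)"
        using liftp_spec(2)[OF f gc_dual[OF cl c1v_zero], of x 0 t]
        by (simp add: h'_def evf_s0 evf_dual)
      then show "poly (ev1 x h') t = poly (poly (ev2 x M) [:lam:]) t"
        using evM[of lam t] by (simp add: evf_def)
    qed
    then have "coeff (ev1 x h') k = poly (map_poly (\<lambda>q. coeff q k) (ev2 x M)) lam"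
      by (simp only: coeff_poly_const)
    then show ?thesis using h[of lam] by (simp add: h'_def)
  qed
  then have "map_poly (\<lambda>q. coeff q k) (ev2 x M) = 0" by (intro kpoly_unique) simp
  then have "coeff (map_poly (\<lambda>q. coeff q k) (ev2 x M)) 1 = 0" by simp
  then show ?thesis by (simp add: coeff_map_poly M_def)
qed

definition psl :: "(nat \<Rightarrow> 'k::field_char_0^'n::finite \<Rightarrow> 'k^'n) \<Rightarrow> 'k \<Rightarrow> nat \<Rightarrow> 'k^'n \<Rightarrow> 'k^'n" where
  "psl ps lam j y = (if j = 0 then y else ps j y + lam *s (om (ps j) (ps 1) y - of_nat (Suc j) *s ps (Suc j) y))"

lemma fam_zero: "fam G \<rho> N ps \<Longrightarrow> j > N \<Longrightarrow> ps j = (\<lambda>y. 0)"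
  by (auto simp: fam_def)

lemma fam_psl: "fam G \<rho> N ps \<Longrightarrow> fam G \<rho> N (psl ps lam)"
proof -
  assume fm: "fam G \<rho> N ps"
  have "Eq G \<rho> (psl ps lam j)" for j
  proof (cases "j = 0")
    case True
    have "psl ps lam 0 = (\<lambda>y. y)" by (rule ext) (simp add: psl_def)
    then show ?thesis using True Eq_id by simp
  next
    case False
    have "Eq G \<rho> (\<lambda>y. ps j y + lam *s (om (ps j) (ps 1) y - of_nat (Suc j) *s ps (Suc j) y))"
      by (intro Eq_add Eq_smult Eq_diff om_Eq fam_Eq[OF fm])
    moreover have "psl ps lam j = (\<lambda>y. ps j y + lam *s (om (ps j) (ps 1) y - of_nat (Suc j) *s ps (Suc j) y))"
      using False by (intro ext) (simp only: psl_def if_False)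
    ultimately show ?thesis by simp
  qed
  moreover have "psl ps lam j y = 0" if "j > N" for j y
  proof -
    have "ps j = (\<lambda>y. 0)" "ps (Suc j) = (\<lambda>y. 0)" using fam_zero[OF fm] that by auto
    then show ?thesis using that by (simp add: psl_def om_zero)
  qed
  ultimately show ?thesis by (simp add: fam_def psl_def)
qed

definition Zv :: "nat \<Rightarrow> (nat \<Rightarrow> 'k::field_char_0^'n::finite \<Rightarrow> 'k^'n) \<Rightarrow> (('k,'n) R0 poly)^'n" where
  "Zv N ps = (\<chi> i. Bv N ps $ i - pd (Phi N ps $ i))"

lemma coeff_Zv:
  assumes "fam G \<rho> N ps"
  shows "coeff (Zv N ps $ i) m = (\<lambda>y. om (ps m) (ps 1) y $ i - of_nat (Suc m) * ps (Suc m) y $ i)"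
  by (simp add: Zv_def coeff_Bv[OF assms] coeff_pd coeff_Phi[OF assms] fun_eq_iff)

lemma c1v_Zv: "fam G \<rho> N ps \<Longrightarrow> c1v (Zv N ps)"
proof -
  assume fm: "fam G \<rho> N ps"
  have "Eq G \<rho> (om (ps m) (ps 1))" for m by (rule om_Eq[OF fam_Eq[OF fm] fam_Eq[OF fm]])
  then show ?thesis unfolding c1v_def cset_def
    by (auto simp: coeff_Zv[OF fm] intro!: vp_diff vp_smult Eq_poly_map fam_Eq[OF fm])
qed

lemma Phi_psl:
  assumes fm: "fam G \<rho> N ps"
  shows "Phi N (psl ps lam) = (\<chi> i. Phi N ps $ i + smult (\<lambda>_. lam) (Zv N ps $ i))"
proof -
  have fm': "fam G \<rho> N (psl ps lam)" by (rule fam_psl[OF fm])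
  have p0: "ps 0 = (\<lambda>y. y)" using fm by (auto simp: fam_def)
  show ?thesis
  proof (subst vec_eq_iff, intro allI poly_eqI)
    fix i m
    show "coeff (Phi N (psl ps lam) $ i) m = coeff ((\<chi> i. Phi N ps $ i + smult (\<lambda>_. lam) (Zv N ps $ i)) $ i) m"
      by (cases "m = 0")
        (auto simp: coeff_Phi[OF fm'] coeff_Phi[OF fm] coeff_Zv[OF fm] psl_def fun_eq_iff p0 om_id
         algebra_simps)
  qed
qed

lemma step:
  fixes X :: "('k::field_char_0^'n::finite) set"
  assumes T: "\<And>\<xi> x. Eq G \<rho> \<xi> \<Longrightarrow> x \<in> X \<Longrightarrow> \<xi> x \<in> tangent_space X x"
    and IH: "\<And>N ps f x. fam G \<rho> N ps \<Longrightarrow> f \<in> vpolys \<Longrightarrow> (\<forall>y\<in>X. f y = 0) \<Longrightarrow> x \<in> X \<Longrightarrow>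
        coeff (coeff (liftp f (dual (Phi N ps) 0)) 0) k x = 0"
    and fm: "fam G \<rho> N ps" and f: "f \<in> vpolys" and fX: "\<forall>y\<in>X. f y = 0" and x: "x \<in> X"
  shows "coeff (coeff (liftp f (dual (Phi N ps) 0)) 0) (Suc k) x = 0"
proof -
  define h where "h = coeff (liftp f (dual (Phi N ps) 0)) 0"
  define D where "D B = coeff (liftp f (dual (Phi N ps) B)) 1" for B
  have gv: "coeff h k \<in> vpolys"
    unfolding h_def by (rule gc_coeff[OF liftp_spec(1)[OF f gc_dual[OF c1v_Phi[OF fm] c1v_zero]]])
  have g0: "\<forall>y\<in>X. coeff h k y = 0" using IH[OF fm f fX] by (simp add: h_def)
  have "ps 1 x \<in> tangent_space X x" by (rule T[OF fam_Eq[OF fm] x])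
  then have "dderiv (coeff h k) x (ps 1 x) = 0" using gv g0 by (simp add: tangent_space_def)
  then have dB: "coeff (D (Bv N ps)) k x = 0" using S2[OF f fm, of k x] by (simp add: h_def D_def)
  have BZ: "Bv N ps = Zv N ps + pdv (Phi N ps)" by (simp add: Zv_def pdv_def vec_eq_iff)
  have add: "D (Bv N ps) = D (Zv N ps) + D (pdv (Phi N ps))"
    unfolding BZ D_def using DADD[OF f c1v_Phi[OF fm] c1v_Zv[OF fm] c1v_pdv[OF c1v_Phi[OF fm]]] by simp
  have der: "pd h = D (pdv (Phi N ps))"
    unfolding h_def D_def by (rule DERIV_lift[OF f c1v_Phi[OF fm]])
  have dZ: "coeff (D (Zv N ps)) k x = 0"
    unfolding D_def
  proof (rule pol[OF f c1v_Phi[OF fm] c1v_Zv[OF fm]])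
    fix lam
    show "coeff (coeff (liftp f (dual (\<chi> i. Phi N ps $ i + smult (\<lambda>_. lam) (Zv N ps $ i)) 0)) 0) k x = 0"
      using IH[OF fam_psl[OF fm, of lam] f fX x] by (simp add: Phi_psl[OF fm])
  qed
  have "coeff (pd h) k x = 0" using dB dZ add der by simp
  then have "of_nat (Suc k) * coeff h (Suc k) x = 0" by (simp add: coeff_pd)
  moreover have "(of_nat (Suc k) :: 'k) \<noteq> 0" by (rule of_nat_neq_0)
  ultimately show ?thesis by (simp add: h_def)
qed


lemma Phit0: "Phit N ps 0 x = ps 0 x"
  by (induction N) (simp_all add: Phit_def)

lemma all_k:
  fixes X :: "('k::field_char_0^'n::finite) set"
  assumes T: "\<And>\<xi> x. Eq G \<rho> \<xi> \<Longrightarrow> x \<in> X \<Longrightarrow> \<xi> x \<in> tangent_space X x"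
  shows "fam G \<rho> N ps \<Longrightarrow> f \<in> vpolys \<Longrightarrow> (\<forall>y\<in>X. f y = 0) \<Longrightarrow> x \<in> X \<Longrightarrow>
        coeff (coeff (liftp f (dual (Phi N ps) 0)) 0) k x = 0"
proof (induction k arbitrary: N ps f x)
  case 0
  have "coeff (coeff (liftp f (dual (Phi N ps) 0)) 0) 0 x
      = poly (ev1 x (coeff (liftp f (dual (Phi N ps) 0)) 0)) 0"
    by (simp add: poly_0_coeff_0)
  also have "\<dots> = f x" using CF[OF 0(2,1)] Phit0[of N ps x] 0(1) by (simp add: fam_def)
  finally show ?case using 0 by simp
next
  case (Suc k)
  have IH': "\<And>N ps f x. fam G \<rho> N ps \<Longrightarrow> f \<in> vpolys \<Longrightarrow> (\<forall>y\<in>X. f y = 0) \<Longrightarrow> x \<in> X \<Longrightarrow>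
        coeff (coeff (liftp f (dual (Phi N ps) 0)) 0) k x = 0" by (rule Suc.IH)
  show ?case
    apply (rule step[where G=G and \<rho>=\<rho> and X=X and k=k])
         apply (rule T, assumption, assumption)
        apply (rule IH', assumption+)
    using Suc.prems by auto
qed

lemma sym_closed:
  fixes X :: "('k::field_char_0^'n::finite) set"
  assumes T: "\<And>\<xi> x. Eq G \<rho> \<xi> \<Longrightarrow> x \<in> X \<Longrightarrow> \<xi> x \<in> tangent_space X x"
    and XF: "X = {v. \<forall>f\<in>F. f v = 0}" and F: "F \<subseteq> vpolys"
    and v: "v \<in> X" and \<phi>: "Eq G \<rho> \<phi>"
  shows "\<phi> v \<in> X"
proof -
  define ps where "ps (j::nat) = (if j = 0 then (\<lambda>y. y) else if j = 1 then (\<lambda>y. \<phi> y - y) else (\<lambda>y. 0))" for j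
  have fm: "fam G \<rho> 1 ps"
    unfolding fam_def ps_def using Eq_id Eq_zero Eq_diff[OF \<phi> Eq_id] by auto
  have "f (\<phi> v) = 0" if f: "f \<in> F" for f
  proof -
    have fv: "f \<in> vpolys" using f F by auto
    have fX: "\<forall>y\<in>X. f y = 0" using f XF by auto
    define h where "h = coeff (liftp f (dual (Phi 1 ps) 0)) 0"
    have ak: "coeff h k v = 0" for k
      unfolding h_def
      apply (rule all_k[where G=G and \<rho>=\<rho> and X=X])
          apply (rule T, assumption, assumption)
      using fm fv fX v by auto
    have "ev1 v h = 0"
      using ak by (intro poly_eqI) simp
    then have "f (Phit 1 ps 1 v) = 0" using CF[OF fv fm, of v 1] by (simp add: h_def)
    moreover have "Phit 1 ps 1 v = \<phi> v" by (simp add: Phit_def ps_def)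
    ultimately show ?thesis by simp
  qed
  then show ?thesis using XF by auto
qed

lemma linear_sep:
  fixes S :: "('k::field_char_0^'n::finite) set"
  assumes S0: "0 \<in> S" and Sa: "\<And>a b. a \<in> S \<Longrightarrow> b \<in> S \<Longrightarrow> a + b \<in> S"
    and Ss: "\<And>c a. a \<in> S \<Longrightarrow> c *s a \<in> S" and x: "x \<notin> S"
  shows "\<exists>f\<in>vpolys. (\<forall>y\<in>S. f y = 0) \<and> f x \<noteq> 0"
proof -
  interpret VP: vector_space_pair "(*s) :: 'k \<Rightarrow> 'k^'n \<Rightarrow> 'k^'n" "(*) :: 'k \<Rightarrow> 'k \<Rightarrow> 'k"
    by unfold_locales
  have sub: "vec.subspace S" using S0 Sa Ss by (simp add: vec.subspace_def)
  obtain B where B: "B \<subseteq> S" "vec.independent B" "S \<subseteq> vec.span B"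
    using vec.maximal_independent_subset by blast
  have spB: "vec.span B \<subseteq> S" by (rule vec.span_minimal[OF B(1) sub])
  have xB: "x \<notin> vec.span B" using spB x by auto
  have ind: "vec.independent (insert x B)" by (rule vec.independent_insertI[OF xB B(2)])
  obtain g where g: "Vector_Spaces.linear (*s) (*) g" "\<forall>z\<in>insert x B. g z = (if z = x then 1 else 0)"
    using VP.linear_independent_extend[OF ind, of "\<lambda>z. if z = x then 1 else 0"] by blast
  have xnB: "x \<notin> B" using xB vec.span_base by blast
  have gB: "\<And>z. z \<in> B \<Longrightarrow> g z = 0" using g(2) xnB by auto
  have gS: "\<forall>y\<in>S. g y = 0"
    using VP.linear_eq_0_on_span[OF g(1) gB] B(3) by blast
  have gx: "g x = 1" using g(2) by simp
  have rep: "g y = (\<Sum>i\<in>UNIV. g (axis i 1) * y $ i)" for y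
  proof -
    have "g y = g (\<Sum>i\<in>UNIV. (y$i) *s axis i 1)" by (simp add: basis_expansion)
    also have "\<dots> = (\<Sum>i\<in>UNIV. y$i * g (axis i 1))"
      by (simp add: VP.linear_sum[OF g(1)] VP.linear_scale[OF g(1)])
    finally show ?thesis by (simp add: mult.commute)
  qed
  have "g = (\<lambda>y. \<Sum>i\<in>UNIV. g (axis i 1) * y $ i)" by (rule ext) (rule rep)
  then have "g \<in> vpolys" using vp_linear[of "\<lambda>i. g (axis i 1)"] by simp
  then show ?thesis using gS gx by auto
qed

lemma linear_closed:
  fixes S :: "('k::field_char_0^'n::finite) set"
  assumes "0 \<in> S" "\<And>a b. a \<in> S \<Longrightarrow> b \<in> S \<Longrightarrow> a + b \<in> S" "\<And>c a. a \<in> S \<Longrightarrow> c *s a \<in> S"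
  shows "closed_subvariety S"
  unfolding closed_subvariety_def
proof (rule exI[of _ "{f\<in>vpolys. \<forall>y\<in>S. f y = 0}"], intro conjI)
  show "S = {v. \<forall>f\<in>{f \<in> vpolys. \<forall>y\<in>S. f y = 0}. f v = 0}"
    using linear_sep[OF assms] by auto
qed auto

lemma linear_tangent:
  fixes S :: "('k::field_char_0^'n::finite) set"
  assumes "\<And>a b. a \<in> S \<Longrightarrow> b \<in> S \<Longrightarrow> a + b \<in> S" "\<And>c a. a \<in> S \<Longrightarrow> c *s a \<in> S"
    and "x \<in> S" "w \<in> S"
  shows "w \<in> tangent_space S x"
  unfolding tangent_space_def
proof (intro CollectI ballI impI)
  fix f assume f: "f \<in> vpolys" and fS: "\<forall>y\<in>S. f y = 0"
  have "f (x + t *s w) = 0" for t using assms fS by auto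
  then have "\<forall>t. poly 0 t = f (x + t *s w)" by simp
  then have "dderiv f x w = coeff 0 1" by (rule dderiv_char)
  then show "dderiv f x w = 0" by simp
qed


lemma vp_comp:
  assumes "f \<in> vpolys" "poly_map \<phi>"
  shows "(\<lambda>y. f (\<phi> y)) \<in> vpolys"
proof (induction rule: polys.induct[of f "{(\<lambda>x. x $ i) | i. True}", OF assms(1)[unfolded vpolys_def]])
  case (1 f)
  then obtain i where f: "f = (\<lambda>x. x $ i)" by auto
  show ?case using assms(2) by (simp add: f poly_map_def)
next
  case (2 c) show ?case by (rule vp_const)
next
  case (3 f g) then show ?case by (intro vp_add) auto
next
  case (4 f g) then show ?case by (intro vp_mult) auto
qed

lemma Eq_comp: "Eq G \<rho> \<xi> \<Longrightarrow> Eq G \<rho> \<phi> \<Longrightarrow> Eq G \<rho> (\<lambda>y. \<xi> (\<phi> y))"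
  unfolding equivariant_poly_map_def
  by (auto simp: poly_map_def intro: vp_comp[unfolded poly_map_def])

theorem proposition4p3p2:
  fixes G :: "('k::field_char_0 ^ 'm ^ 'm) set"
    and \<rho> :: "'k ^ 'm ^ 'm \<Rightarrow> 'k ^ 'n ^ 'n"
  assumes "alg_closed_field TYPE('k)"
    and "lin_alg_group G"
    and "rational_rep G \<rho>"
  shows "(\<forall>H. closed_subgroup G H \<longrightarrow> G_symmetric G \<rho> (fixed_points \<rho> H))
       \<and> (\<forall>v. Msym G \<rho> v = EndG_orbit G \<rho> v
              \<and> EndG_orbit G \<rho> v \<subseteq> fixed_points \<rho> (stabilizer G \<rho> v))"
proof (intro conjI allI impI)
  fix H assume cs: "closed_subgroup G H"
  define S where "S = fixed_points \<rho> H"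
  have S0: "0 \<in> S" by (simp add: S_def fixed_points_def)
  have Sa: "a + b \<in> S" if "a \<in> S" "b \<in> S" for a b
    using that by (simp add: S_def fixed_points_def matrix_vector_right_distrib)
  have Ss: "c *s a \<in> S" if "a \<in> S" for c a
    using that by (simp add: S_def fixed_points_def vector_scalar_commute)
  have "\<xi> x \<in> tangent_space S x" if "Eq G \<rho> \<xi>" "x \<in> S" for \<xi> x
  proof (rule linear_tangent[OF Sa Ss that(2)])
    show "\<xi> x \<in> S" unfolding S_def fixed_points_def
    proof (intro CollectI ballI)
      fix h assume "h \<in> H"
      then have "h \<in> G" using cs by (auto simp: closed_subgroup_def)
      then have "\<xi> (\<rho> h *v x) = \<rho> h *v \<xi> x" using that(1) by (auto simp: equivariant_poly_map_def)
      moreover have "\<rho> h *v x = x" using that(2) \<open>h \<in> H\<close> by (auto simp: S_def fixed_points_def)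
      ultimately show "\<rho> h *v \<xi> x = \<xi> x" by simp
    qed
  qed
  then show "G_symmetric G \<rho> (fixed_points \<rho> H)"
    unfolding G_symmetric_def S_def[symmetric] using linear_closed[OF S0 Sa Ss] by blast
next
  fix v :: "'k^'n"
  define L where "L = EndG_orbit G \<rho> v"
  have L0: "0 \<in> L" unfolding L_def EndG_orbit_def using Eq_zero by fastforce
  have La: "a + b \<in> L" if "a \<in> L" "b \<in> L" for a b
  proof -
    from that(1) obtain \<phi> where "a = \<phi> v" "Eq G \<rho> \<phi>"
      unfolding L_def EndG_orbit_def by blast
    moreover from that(2) obtain \<psi> where "b = \<psi> v" "Eq G \<rho> \<psi>"
      unfolding L_def EndG_orbit_def by blast
    ultimately show ?thesis unfolding L_def EndG_orbit_def using Eq_add by fastforce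
  qed
  have Ls: "c *s a \<in> L" if "a \<in> L" for c a
  proof -
    from that obtain \<phi> where "a = \<phi> v" "Eq G \<rho> \<phi>" unfolding L_def EndG_orbit_def by blast
    then show ?thesis unfolding L_def EndG_orbit_def using Eq_smult by fastforce
  qed
  have vL: "v \<in> L" unfolding L_def EndG_orbit_def using Eq_id by fastforce
  have symL: "G_symmetric G \<rho> L"
    unfolding G_symmetric_def
  proof (intro conjI allI impI ballI)
    show "closed_subvariety L" by (rule linear_closed[OF L0 La Ls])
    fix \<xi> x assume \<xi>: "Eq G \<rho> \<xi>" and x: "x \<in> L"
    obtain \<phi> where "x = \<phi> v" "Eq G \<rho> \<phi>" using x by (auto simp: L_def EndG_orbit_def)
    then have "\<xi> x \<in> L" unfolding L_def EndG_orbit_def using Eq_comp[OF \<xi>] by fastforce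
    then show "\<xi> x \<in> tangent_space L x" using linear_tangent[of L x "\<xi> x"] La Ls x by blast
  qed
  have "Msym G \<rho> v \<subseteq> L" unfolding Msym_def using symL vL by blast
  moreover have "L \<subseteq> Msym G \<rho> v"
  proof
    fix w assume "w \<in> L"
    then obtain \<phi> where w: "w = \<phi> v" "Eq G \<rho> \<phi>" by (auto simp: L_def EndG_orbit_def)
    show "w \<in> Msym G \<rho> v" unfolding Msym_def
    proof (rule InterI)
      fix X assume "X \<in> {X. G_symmetric G \<rho> X \<and> v \<in> X}"
      then have sX: "G_symmetric G \<rho> X" and vX: "v \<in> X" by auto
      obtain F where F: "F \<subseteq> vpolys" "X = {v. \<forall>f\<in>F. f v = 0}"
        using sX unfolding G_symmetric_def closed_subvariety_def by blast
      have T: "\<And>\<xi> x. Eq G \<rho> \<xi> \<Longrightarrow> x \<in> X \<Longrightarrow> \<xi> x \<in> tangent_space X x"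
        using sX unfolding G_symmetric_def by blast
      show "w \<in> X" unfolding w(1)
        apply (rule sym_closed[where G=G and \<rho>=\<rho> and X=X and F=F and \<phi>=\<phi> and v=v])
            apply (rule T, assumption, assumption)
        using F vX w(2) by auto
    qed
  qed
  ultimately show "Msym G \<rho> v = EndG_orbit G \<rho> v" by (simp add: L_def)
  show "EndG_orbit G \<rho> v \<subseteq> fixed_points \<rho> (stabilizer G \<rho> v)"
  proof
    fix w assume "w \<in> EndG_orbit G \<rho> v"
    then obtain \<phi> where w: "w = \<phi> v" "Eq G \<rho> \<phi>" unfolding EndG_orbit_def by blast
    show "w \<in> fixed_points \<rho> (stabilizer G \<rho> v)" unfolding fixed_points_def
    proof (intro CollectI ballI)
      fix h assume "h \<in> stabilizer G \<rho> v"
      then have h: "h \<in> G" "\<rho> h *v v = v" by (auto simp: stabilizer_def)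
      have "\<phi> (\<rho> h *v v) = \<rho> h *v \<phi> v" using w(2) h(1) unfolding equivariant_poly_map_def by blast
      then show "\<rho> h *v w = w" using h(2) w(1) by simp
    qed
  qed
qed

end
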